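(* The Haar state $h$ of $\mathbb G_\theta=(A_\theta^n,\Delta)$ satisfies $$h(x_\sigma^{\vec r})=\frac{1}{n!}\,\delta_{\vec 0,\vec r}\qquad\text{for all }\sigma\in S_n,\ \vec r\in\mathbb Z^n.$$
   Context: Let $n\ge2$, $\theta\in M_n(\mathbb R)$ skew-symmetric. For a real skew-symmetric $\eta$, $C(\mathbb T^n_\eta)$ is the universal C*-algebra generated by unitaries $x_1,\dots,x_n$ with $x_ix_j=e^{2\pi i\eta_{ij}}x_jx_i$. For $\sigma\in S_n$, $\theta^{(\sigma)}_{ij}=\theta_{ji}+\theta_{\sigma^{-1}(i),\sigma^{-1}(j)}$; $A_\theta^n=\bigoplus_{\sigma\in S_n}C(\mathbb T^n_{\theta^{(\sigma)}})$; $x_{\sigma,i}$ is the $i$-th generator of the $\sigma$-th summand (extended by $0$); $u_{ik}=\sum_{\sigma:\sigma(k)=i}x_{\sigma,i}$; $\Delta$ is the unital *-homomorphism with $\Delta(u_{ik})=\sum_ju_{ij}\otimes u_{jk}$, making $(A_\theta^n,\Delta)$ a compact quantum group. For $\vec r=(r_1,\dots,r_n)\in\mathbb Z^n$, $x_\sigma^{\vec r}=x_{\sigma,1}^{r_1}\cdots x_{\sigma,n}^{r_n}$, computed in the $\sigma$-th summand, where negative powers mean powers of the adjoint and $x_{\sigma,i}^0$ is the unit $p_\sigma$ of the $\sigma$-th summand. The Haar state is the unique state $h$ on $A_\theta^n$ with $(\mathrm{id}\otimes h)\Delta=h(\cdot)1=(h\otimes\mathrm{id})\Delta$. *)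

theory Defs
  imports Complex_Main "HOL-Combinatorics.Permutations" "HOL-Library.Function_Algebras"
begin

text \<open>
Algebraic model of the dense *-subalgebra O(A) of
A_theta^n = (direct sum over sigma in S_n) C(T^n_{theta^(sigma)}).
Generators are indexed 0..n-1 (instead of 1..n).
A basis element is indexed by a key (sigma, r): sigma a permutation of {..<n},
r :: nat => int a vector with r i = 0 for i >= n; it stands for the normal-ordered
monomial x_{sigma,0}^{r 0} ... x_{sigma,n-1}^{r (n-1)} of the sigma-th summand.
An element of O(A) is a finitely supported coefficient function on valid keys.
The algebraic tensor product O(A) (x) O(A) is modelled by finitely supported
coefficient functions on pairs of valid keys.
\<close>

type_synonym qkey = "(nat \<Rightarrow> nat) \<times> (nat \<Rightarrow> int)"
type_synonym qel = "qkey \<Rightarrow> complex"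
type_synonym qel2 = "qkey \<times> qkey \<Rightarrow> complex"

definition valid_key :: "nat \<Rightarrow> qkey \<Rightarrow> bool" where
  "valid_key n k \<longleftrightarrow> fst k permutes {..<n} \<and> (\<forall>i\<ge>n. snd k i = 0)"

definition Alg :: "nat \<Rightarrow> qel set" where
  "Alg n = {f. finite {k. f k \<noteq> 0} \<and> (\<forall>k. f k \<noteq> 0 \<longrightarrow> valid_key n k)}"

definition Alg2 :: "nat \<Rightarrow> qel2 set" where
  "Alg2 n = {F. finite {p. F p \<noteq> 0} \<and>
     (\<forall>k l. F (k, l) \<noteq> 0 \<longrightarrow> valid_key n k \<and> valid_key n l)}"

definition theta_sig :: "(nat \<Rightarrow> nat \<Rightarrow> real) \<Rightarrow> (nat \<Rightarrow> nat) \<Rightarrow> nat \<Rightarrow> nat \<Rightarrow> real" where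
  "theta_sig \<theta> \<sigma> i j = \<theta> j i + \<theta> (inv \<sigma> i) (inv \<sigma> j)"

text \<open>Twist: with x_i x_j = e^{2 pi i eta_ij} x_j x_i, one has
  x^r x^s = tw r s * x^(r+s)  and  (x^r)^* = tw r r * x^(-r)
  for normal-ordered monomials, where tw r s = prod_{j<i} e^{2 pi i eta_ij r_i s_j}.\<close>
definition tw :: "nat \<Rightarrow> (nat \<Rightarrow> nat \<Rightarrow> real) \<Rightarrow> (nat \<Rightarrow> nat) \<Rightarrow> (nat \<Rightarrow> int) \<Rightarrow> (nat \<Rightarrow> int) \<Rightarrow> complex" where
  "tw n \<theta> \<sigma> r s = cis (2 * pi * (\<Sum>i<n. \<Sum>j<i. theta_sig \<theta> \<sigma> i j * of_int (r i) * of_int (s j)))"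

definition qmult :: "nat \<Rightarrow> (nat \<Rightarrow> nat \<Rightarrow> real) \<Rightarrow> qel \<Rightarrow> qel \<Rightarrow> qel" where
  "qmult n \<theta> f g = (\<lambda>(\<sigma>, t). \<Sum>r\<in>{r. f (\<sigma>, r) \<noteq> 0}.
      f (\<sigma>, r) * g (\<sigma>, t - r) * tw n \<theta> \<sigma> r (t - r))"

definition qstar :: "nat \<Rightarrow> (nat \<Rightarrow> nat \<Rightarrow> real) \<Rightarrow> qel \<Rightarrow> qel" where
  "qstar n \<theta> f = (\<lambda>(\<sigma>, t). cnj (f (\<sigma>, - t)) * tw n \<theta> \<sigma> t t)"

definition qone :: "nat \<Rightarrow> qel" where
  "qone n = (\<lambda>(\<sigma>, t). if \<sigma> permutes {..<n} \<and> t = (\<lambda>_. 0) then 1 else 0)"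

definition qscale :: "complex \<Rightarrow> qel \<Rightarrow> qel" where
  "qscale c f = (\<lambda>k. c * f k)"

definition qtensor :: "qel \<Rightarrow> qel \<Rightarrow> qel2" where
  "qtensor f g = (\<lambda>(k, l). f k * g l)"

definition qmult2 :: "nat \<Rightarrow> (nat \<Rightarrow> nat \<Rightarrow> real) \<Rightarrow> qel2 \<Rightarrow> qel2 \<Rightarrow> qel2" where
  "qmult2 n \<theta> F G = (\<lambda>((\<sigma>, t), (\<tau>, u)). \<Sum>(r, s)\<in>{(r, s). F ((\<sigma>, r), (\<tau>, s)) \<noteq> 0}.
      F ((\<sigma>, r), (\<tau>, s)) * G ((\<sigma>, t - r), (\<tau>, u - s))
        * tw n \<theta> \<sigma> r (t - r) * tw n \<theta> \<tau> s (u - s))"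

definition qstar2 :: "nat \<Rightarrow> (nat \<Rightarrow> nat \<Rightarrow> real) \<Rightarrow> qel2 \<Rightarrow> qel2" where
  "qstar2 n \<theta> F = (\<lambda>((\<sigma>, t), (\<tau>, u)).
      cnj (F ((\<sigma>, - t), (\<tau>, - u))) * tw n \<theta> \<sigma> t t * tw n \<theta> \<tau> u u)"

definition qone2 :: "nat \<Rightarrow> qel2" where
  "qone2 n = qtensor (qone n) (qone n)"

definition qscale2 :: "complex \<Rightarrow> qel2 \<Rightarrow> qel2" where
  "qscale2 c F = (\<lambda>p. c * F p)"

definition slice_right :: "(qel \<Rightarrow> complex) \<Rightarrow> qel2 \<Rightarrow> qel" where
  "slice_right h F = (\<lambda>k. h (\<lambda>l. F (k, l)))"

definition slice_left :: "(qel \<Rightarrow> complex) \<Rightarrow> qel2 \<Rightarrow> qel" where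
  "slice_left h F = (\<lambda>l. h (\<lambda>k. F (k, l)))"

definition psum :: "(nat \<Rightarrow> nat) \<Rightarrow> qel" where
  "psum \<sigma> = (\<lambda>k. if k = (\<sigma>, \<lambda>_. 0) then 1 else 0)"

definition gen :: "(nat \<Rightarrow> nat) \<Rightarrow> nat \<Rightarrow> qel" where
  "gen \<sigma> i = (\<lambda>k. if k = (\<sigma>, \<lambda>j. if j = i then 1 else 0) then 1 else 0)"

definition uent :: "nat \<Rightarrow> nat \<Rightarrow> nat \<Rightarrow> qel" where
  "uent n i k = (\<Sum>\<sigma>\<in>{\<sigma>. \<sigma> permutes {..<n} \<and> \<sigma> k = i}. gen \<sigma> i)"

definition gpow :: "nat \<Rightarrow> (nat \<Rightarrow> nat \<Rightarrow> real) \<Rightarrow> (nat \<Rightarrow> nat) \<Rightarrow> nat \<Rightarrow> int \<Rightarrow> qel" where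
  "gpow n \<theta> \<sigma> i k = (if 0 \<le> k then (qmult n \<theta> (gen \<sigma> i) ^^ nat k) (psum \<sigma>)
                      else (qmult n \<theta> (qstar n \<theta> (gen \<sigma> i)) ^^ nat (- k)) (psum \<sigma>))"

definition xpow :: "nat \<Rightarrow> (nat \<Rightarrow> nat \<Rightarrow> real) \<Rightarrow> (nat \<Rightarrow> nat) \<Rightarrow> (nat \<Rightarrow> int) \<Rightarrow> qel" where
  "xpow n \<theta> \<sigma> r = foldr (\<lambda>i acc. qmult n \<theta> (gpow n \<theta> \<sigma> i (r i)) acc) [0..<n] (psum \<sigma>)"

definition is_comult :: "nat \<Rightarrow> (nat \<Rightarrow> nat \<Rightarrow> real) \<Rightarrow> (qel \<Rightarrow> qel2) \<Rightarrow> bool" where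
  "is_comult n \<theta> \<Delta> \<longleftrightarrow>
     (\<forall>a\<in>Alg n. \<Delta> a \<in> Alg2 n) \<and>
     (\<forall>a\<in>Alg n. \<forall>b\<in>Alg n. \<Delta> (a + b) = \<Delta> a + \<Delta> b) \<and>
     (\<forall>a\<in>Alg n. \<forall>c. \<Delta> (qscale c a) = qscale2 c (\<Delta> a)) \<and>
     (\<forall>a\<in>Alg n. \<forall>b\<in>Alg n. \<Delta> (qmult n \<theta> a b) = qmult2 n \<theta> (\<Delta> a) (\<Delta> b)) \<and>
     (\<forall>a\<in>Alg n. \<Delta> (qstar n \<theta> a) = qstar2 n \<theta> (\<Delta> a)) \<and>
     \<Delta> (qone n) = qone2 n \<and>
     (\<forall>i<n. \<forall>k<n. \<Delta> (uent n i k) = (\<Sum>j<n. qtensor (uent n i j) (uent n j k)))"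

definition is_state :: "nat \<Rightarrow> (nat \<Rightarrow> nat \<Rightarrow> real) \<Rightarrow> (qel \<Rightarrow> complex) \<Rightarrow> bool" where
  "is_state n \<theta> h \<longleftrightarrow>
     (\<forall>a\<in>Alg n. \<forall>b\<in>Alg n. h (a + b) = h a + h b) \<and>
     (\<forall>a\<in>Alg n. \<forall>c. h (qscale c a) = c * h a) \<and>
     (\<forall>a\<in>Alg n. Im (h (qmult n \<theta> (qstar n \<theta> a) a)) = 0 \<and>
                  Re (h (qmult n \<theta> (qstar n \<theta> a) a)) \<ge> 0) \<and>
     h (qone n) = 1"

definition is_haar_state :: "nat \<Rightarrow> (nat \<Rightarrow> nat \<Rightarrow> real) \<Rightarrow> (qel \<Rightarrow> qel2) \<Rightarrow> (qel \<Rightarrow> complex) \<Rightarrow> bool" where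
  "is_haar_state n \<theta> \<Delta> h \<longleftrightarrow> is_state n \<theta> h \<and>
     (\<forall>a\<in>Alg n. slice_right h (\<Delta> a) = qscale (h a) (qone n) \<and>
                 slice_left h (\<Delta> a) = qscale (h a) (qone n))"

end

theory Submission
  imports Defs
begin


lemma sum_fun_apply': "(\<Sum>x\<in>A. f x) y = (\<Sum>x\<in>A. f x y)"
  by (induction A rule: infinite_finite_induct) auto

definition ee :: "nat \<Rightarrow> nat \<Rightarrow> int" where "ee i = (\<lambda>j. if j = i then 1 else 0)"

lemma tw_one:
  assumes "\<forall>a b. b < a \<longrightarrow> x a = 0 \<or> y b = 0"
  shows "tw n \<theta> \<sigma> x y = 1"
proof -
  have "(\<Sum>i<n. \<Sum>j<i. theta_sig \<theta> \<sigma> i j * of_int (x i) * of_int (y j)) = 0"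
    by (rule sum.neutral, rule ballI, rule sum.neutral) (use assms in auto)
  thus ?thesis by (simp add: tw_def)
qed

lemma tw_ee: "tw n \<theta> \<sigma> (c * ee i) (d * ee i) = 1" "tw n \<theta> \<sigma> 0 x = 1"
  "tw n \<theta> \<sigma> (- ee i) (ee i) = 1" "tw n \<theta> \<sigma> (- ee i) (- ee i) = 1"
  by (rule tw_one; auto simp: ee_def)+

lemma qmult_single:
  assumes "\<And>r. f (\<sigma>,r) \<noteq> 0 \<longleftrightarrow> C \<and> r = r0"
  shows "qmult n \<theta> f g (\<sigma>,t) = (if C then f (\<sigma>,r0) * g (\<sigma>, t - r0) * tw n \<theta> \<sigma> r0 (t - r0) else 0)"
proof -
  have "{r. f (\<sigma>,r) \<noteq> 0} = (if C then {r0} else {})" using assms by auto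
  thus ?thesis by (simp add: qmult_def)
qed

lemma qmult_deg0:
  assumes "\<forall>\<sigma> r. f (\<sigma>,r) \<noteq> 0 \<longrightarrow> r = 0"
  shows "qmult n \<theta> f g (\<sigma>,t) = f (\<sigma>,0) * g (\<sigma>,t)"
proof -
  have "\<And>r. f (\<sigma>,r) \<noteq> 0 \<longleftrightarrow> f (\<sigma>,0) \<noteq> 0 \<and> r = 0" using assms by blast
  from qmult_single[of f \<sigma> "f (\<sigma>,0) \<noteq> 0" 0, OF this, of n \<theta> g t]
  show ?thesis by (simp add: tw_ee(2) split: if_splits)
qed

lemma qmult2_single:
  assumes "\<And>r s. F ((\<sigma>,r),(\<tau>,s)) \<noteq> 0 \<longleftrightarrow> C \<and> r = r0 \<and> s = s0"
  shows "qmult2 n \<theta> F G ((\<sigma>,t),(\<tau>,u)) = (if C then F ((\<sigma>,r0),(\<tau>,s0)) * G ((\<sigma>, t - r0),(\<tau>, u - s0))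
      * tw n \<theta> \<sigma> r0 (t - r0) * tw n \<theta> \<tau> s0 (u - s0) else 0)"
proof -
  have "{(r,s). F ((\<sigma>,r),(\<tau>,s)) \<noteq> 0} = (if C then {(r0,s0)} else {})" using assms by auto
  thus ?thesis by (simp add: qmult2_def)
qed

lemma qmult2_deg0:
  assumes "\<forall>\<sigma> r \<tau> s. F ((\<sigma>,r),(\<tau>,s)) \<noteq> 0 \<longrightarrow> r = 0 \<and> s = 0"
  shows "qmult2 n \<theta> F G ((\<sigma>,t),(\<tau>,u)) = F ((\<sigma>,0),(\<tau>,0)) * G ((\<sigma>,t),(\<tau>,u))"
proof -
  have "\<And>r s. F ((\<sigma>,r),(\<tau>,s)) \<noteq> 0 \<longleftrightarrow> F ((\<sigma>,0),(\<tau>,0)) \<noteq> 0 \<and> r = 0 \<and> s = 0" using assms by blast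
  from qmult2_single[of F \<sigma> \<tau> "F ((\<sigma>,0),(\<tau>,0)) \<noteq> 0" 0 0, OF this, of n \<theta> G t u]
  show ?thesis by (simp add: tw_ee(2) split: if_splits)
qed



lemma psum_apply: "psum \<sigma> (\<sigma>',t) = (if \<sigma>' = \<sigma> \<and> t = 0 then 1 else 0)"
  by (auto simp: psum_def zero_fun_def)

lemma gen_apply: "gen \<sigma> i (\<sigma>',t) = (if \<sigma>' = \<sigma> \<and> t = ee i then 1 else 0)"
  by (auto simp: gen_def ee_def)

lemma qone_apply: "qone n (\<sigma>,t) = (if \<sigma> permutes {..<n} \<and> t = 0 then 1 else 0)"
  by (auto simp: qone_def zero_fun_def)

lemma uent_apply: "uent n i k (\<sigma>,t) = (if \<sigma> permutes {..<n} \<and> \<sigma> k = i \<and> t = ee i then 1 else 0)"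
proof -
  have "uent n i k (\<sigma>,t) = (\<Sum>\<tau>\<in>{\<tau>. \<tau> permutes {..<n} \<and> \<tau> k = i}. if \<tau> = \<sigma> then (if t = ee i then 1 else 0) else 0)"
    unfolding uent_def sum_fun_apply' gen_apply by (rule sum.cong) auto
  also have "\<dots> = (if \<sigma> permutes {..<n} \<and> \<sigma> k = i \<and> t = ee i then 1 else 0)"
    by (subst sum.delta) (auto intro: finite_subset[OF _ finite_permutations[of "{..<n}"]])
  finally show ?thesis .
qed

lemma ustar_apply: "qstar n \<theta> (uent n i k) (\<sigma>,t) = (if \<sigma> permutes {..<n} \<and> \<sigma> k = i \<and> t = - ee i then 1 else 0)"
proof -
  have e: "(- t = ee i) \<longleftrightarrow> (t = - ee i)" by (metis minus_minus)
  show ?thesis by (auto simp: qstar_def uent_apply tw_ee e)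
qed

lemma q_apply: "qmult n \<theta> (qstar n \<theta> (uent n i k)) (uent n i k) (\<sigma>,t) =
   (if \<sigma> permutes {..<n} \<and> \<sigma> k = i \<and> t = 0 then 1 else 0)"
proof -
  have "\<And>r. qstar n \<theta> (uent n i k) (\<sigma>,r) \<noteq> 0 \<longleftrightarrow> (\<sigma> permutes {..<n} \<and> \<sigma> k = i) \<and> r = - ee i"
    by (simp add: ustar_apply)
  from qmult_single[of "qstar n \<theta> (uent n i k)" \<sigma> _ "- ee i", OF this, of n \<theta> "uent n i k" t]
  show ?thesis by (auto simp: ustar_apply uent_apply tw_ee)
qed

lemma Alg_intro:
  assumes "\<forall>\<sigma> t. f (\<sigma>,t) \<noteq> 0 \<longrightarrow> \<sigma> permutes {..<n} \<and> t \<in> T" "finite T" "\<forall>t\<in>T. \<forall>i\<ge>n. t i = 0"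
  shows "f \<in> Alg n"
proof -
  have "{k. f k \<noteq> 0} \<subseteq> {\<sigma>. \<sigma> permutes {..<n}} \<times> T" using assms(1) by auto
  moreover have "finite ({\<sigma>. \<sigma> permutes {..<n}} \<times> T)"
    using assms(2) finite_permutations[of "{..<n}"] by auto
  ultimately show ?thesis using assms unfolding Alg_def valid_key_def
    by (auto intro: finite_subset)
qed

lemma ee_zero: "i < n \<Longrightarrow> j \<ge> n \<Longrightarrow> ee i j = 0" by (simp add: ee_def)

lemma psum_Alg: "\<sigma> permutes {..<n} \<Longrightarrow> psum \<sigma> \<in> Alg n"
  by (rule Alg_intro[where T="{0}"]) (auto simp: psum_apply split: if_splits)

lemma gen_Alg: "\<sigma> permutes {..<n} \<Longrightarrow> i < n \<Longrightarrow> gen \<sigma> i \<in> Alg n"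
  by (rule Alg_intro[where T="{ee i}"]) (auto simp: gen_apply ee_def split: if_splits)

lemma qone_Alg: "qone n \<in> Alg n"
  by (rule Alg_intro[where T="{0}"]) (auto simp: qone_apply split: if_splits)

lemma uent_Alg: "i < n \<Longrightarrow> uent n i k \<in> Alg n"
  by (rule Alg_intro[where T="{ee i}"]) (auto simp: uent_apply ee_def split: if_splits)

lemma ustar_Alg: "i < n \<Longrightarrow> qstar n \<theta> (uent n i k) \<in> Alg n"
  by (rule Alg_intro[where T="{- ee i}"]) (auto simp: ustar_apply ee_def split: if_splits)

lemma q_Alg: "qmult n \<theta> (qstar n \<theta> (uent n i k)) (uent n i k) \<in> Alg n"
  by (rule Alg_intro[where T="{0}"]) (auto simp: q_apply split: if_splits)

lemma Alg_add: "f \<in> Alg n \<Longrightarrow> g \<in> Alg n \<Longrightarrow> f + g \<in> Alg n"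
proof -
  assume a: "f \<in> Alg n" "g \<in> Alg n"
  have "{k. (f + g) k \<noteq> 0} \<subseteq> {k. f k \<noteq> 0} \<union> {k. g k \<noteq> 0}" by auto
  with a show ?thesis unfolding Alg_def by (auto intro: finite_subset)
qed

lemma Alg_zero: "0 \<in> Alg n" by (simp add: Alg_def)

lemma Alg_qstar: assumes "f \<in> Alg n" shows "qstar n \<theta> f \<in> Alg n"
proof -
  have "{k. qstar n \<theta> f k \<noteq> 0} \<subseteq> (\<lambda>(\<sigma>,t). (\<sigma>, -t)) ` {k. f k \<noteq> 0}"
  proof
    fix k assume "k \<in> {k. qstar n \<theta> f k \<noteq> 0}"
    then obtain \<sigma> t where k: "k = (\<sigma>,t)" "f (\<sigma>, -t) \<noteq> 0" by (cases k) (auto simp: qstar_def)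
    thus "k \<in> (\<lambda>(\<sigma>,t). (\<sigma>, -t)) ` {k. f k \<noteq> 0}" by (auto intro!: image_eqI[where x="(\<sigma>,-t)"])
  qed
  moreover have "\<forall>k. qstar n \<theta> f k \<noteq> 0 \<longrightarrow> valid_key n k"
  proof (intro allI impI)
    fix k assume "qstar n \<theta> f k \<noteq> 0"
    then obtain \<sigma> t where k: "k = (\<sigma>,t)" "f (\<sigma>, -t) \<noteq> 0" by (cases k) (auto simp: qstar_def)
    with assms have "valid_key n (\<sigma>,-t)" by (auto simp: Alg_def)
    thus "valid_key n k" using k by (auto simp: valid_key_def)
  qed
  ultimately show ?thesis using assms unfolding Alg_def by (auto intro: finite_subset)
qed

lemma qmult_nz:
  assumes "qmult n \<theta> f g (\<sigma>,t) \<noteq> 0"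
  shows "\<exists>r. f (\<sigma>,r) \<noteq> 0 \<and> g (\<sigma>, t - r) \<noteq> 0"
proof -
  from assms have "(\<Sum>r\<in>{r. f (\<sigma>, r) \<noteq> 0}. f (\<sigma>, r) * g (\<sigma>, t - r) * tw n \<theta> \<sigma> r (t - r)) \<noteq> 0"
    by (simp add: qmult_def)
  then obtain r where "r \<in> {r. f (\<sigma>, r) \<noteq> 0}" "f (\<sigma>, r) * g (\<sigma>, t - r) * tw n \<theta> \<sigma> r (t - r) \<noteq> 0"
    by (meson sum.not_neutral_contains_not_neutral)
  thus ?thesis by auto
qed

lemma Alg_qmult: assumes "f \<in> Alg n" "g \<in> Alg n" shows "qmult n \<theta> f g \<in> Alg n"
proof -
  have "{k. qmult n \<theta> f g k \<noteq> 0} \<subseteq> (\<lambda>((\<sigma>,r),(\<tau>,s)). (\<sigma>, r + s)) ` ({k. f k \<noteq> 0} \<times> {k. g k \<noteq> 0})"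
  proof
    fix k assume "k \<in> {k. qmult n \<theta> f g k \<noteq> 0}"
    then obtain \<sigma> t where k: "k = (\<sigma>,t)" "qmult n \<theta> f g (\<sigma>,t) \<noteq> 0" by (cases k) auto
    then obtain r where "f (\<sigma>,r) \<noteq> 0" "g (\<sigma>, t - r) \<noteq> 0" using qmult_nz by blast
    thus "k \<in> (\<lambda>((\<sigma>,r),(\<tau>,s)). (\<sigma>, r + s)) ` ({k. f k \<noteq> 0} \<times> {k. g k \<noteq> 0})"
      using k by (auto intro!: image_eqI[where x="((\<sigma>,r),(\<sigma>,t-r))"])
  qed
  moreover have "finite ({k. f k \<noteq> 0} \<times> {k. g k \<noteq> 0})" using assms by (auto simp: Alg_def)
  moreover have "\<forall>k. qmult n \<theta> f g k \<noteq> 0 \<longrightarrow> valid_key n k"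
  proof (intro allI impI)
    fix k assume "qmult n \<theta> f g k \<noteq> 0"
    then obtain \<sigma> t where k: "k = (\<sigma>,t)" "qmult n \<theta> f g (\<sigma>,t) \<noteq> 0" by (cases k) auto
    then obtain r where "f (\<sigma>,r) \<noteq> 0" "g (\<sigma>, t - r) \<noteq> 0" using qmult_nz by blast
    with assms have "valid_key n (\<sigma>,r)" "valid_key n (\<sigma>,t-r)" by (auto simp: Alg_def)
    thus "valid_key n k" using k by (auto simp: valid_key_def)
  qed
  ultimately show ?thesis unfolding Alg_def by (auto intro: finite_subset)
qed



lemma zf[simp]: "(\<lambda>a. 0::int) = 0" by (simp add: zero_fun_def)

definition qq :: "nat \<Rightarrow> (nat \<Rightarrow> nat \<Rightarrow> real) \<Rightarrow> nat \<Rightarrow> nat \<Rightarrow> qel" where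
  "qq n \<theta> i k = qmult n \<theta> (qstar n \<theta> (uent n i k)) (uent n i k)"

definition PP :: "nat \<Rightarrow> (nat \<Rightarrow> nat \<Rightarrow> real) \<Rightarrow> (nat \<Rightarrow> nat) \<Rightarrow> nat list \<Rightarrow> qel" where
  "PP n \<theta> \<sigma> xs = foldr (\<lambda>k acc. qmult n \<theta> (qq n \<theta> (\<sigma> k) k) acc) xs (qone n)"

definition hom2 :: "(nat \<Rightarrow> int) \<Rightarrow> qel2 \<Rightarrow> bool" where
  "hom2 d F \<longleftrightarrow> (\<forall>\<sigma> t \<tau> u. F ((\<sigma>,t),(\<tau>,u)) \<noteq> 0 \<longrightarrow> t = d)"

lemma qq_apply: "qq n \<theta> i k (\<sigma>,t) = (if \<sigma> permutes {..<n} \<and> \<sigma> k = i \<and> t = 0 then 1 else 0)"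
  by (simp add: qq_def q_apply)

lemma qq_Alg: "qq n \<theta> i k \<in> Alg n" by (simp add: qq_def q_Alg)

lemma PP_apply: "PP n \<theta> \<sigma> xs (\<sigma>',t) = (if \<sigma>' permutes {..<n} \<and> t = 0 \<and> (\<forall>k\<in>set xs. \<sigma>' k = \<sigma> k) then 1 else 0)"
proof (induction xs arbitrary: t)
  case Nil
  then show ?case by (simp add: PP_def qone_apply)
next
  case (Cons a xs)
  have d: "\<forall>\<sigma> r. qq n \<theta> (\<sigma>' a) a (\<sigma>,r) \<noteq> 0 \<longrightarrow> r = 0" for \<sigma>' by (simp add: qq_apply)
  have "PP n \<theta> \<sigma> (a # xs) (\<sigma>',t) = qq n \<theta> (\<sigma> a) a (\<sigma>',0) * PP n \<theta> \<sigma> xs (\<sigma>',t)"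
    unfolding PP_def foldr_Cons o_def by (rule qmult_deg0) (simp add: qq_apply)
  then show ?case using Cons by (auto simp: qq_apply)
qed

lemma PP_Alg: "PP n \<theta> \<sigma> xs \<in> Alg n"
  by (rule Alg_intro[where T="{0}"]) (auto simp: PP_apply split: if_splits)

lemma PP_psum: assumes "\<sigma> permutes {..<n}" shows "PP n \<theta> \<sigma> [0..<n] = psum \<sigma>"
proof -
  have "\<sigma>' = \<sigma>" if "\<sigma>' permutes {..<n}" "\<forall>k<n. \<sigma>' k = \<sigma> k" for \<sigma>'
  proof
    fix x show "\<sigma>' x = \<sigma> x"
      using that assms by (cases "x < n") (auto simp: permutes_not_in)
  qed
  note hh = this
  show ?thesis
  proof (rule ext)
    fix k :: qkey
    obtain \<sigma>' t where k: "k = (\<sigma>',t)" by (cases k)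
    have "(\<sigma>' permutes {..<n} \<and> t = 0 \<and> (\<forall>k\<in>set [0..<n]. \<sigma>' k = \<sigma> k)) \<longleftrightarrow> (\<sigma>' = \<sigma> \<and> t = 0)"
      using hh[of \<sigma>'] assms by auto
    then show "PP n \<theta> \<sigma> [0..<n] k = psum \<sigma> k" unfolding k PP_apply psum_apply by simp
  qed
qed

lemma qmult2_nz:
  assumes "qmult2 n \<theta> F G ((\<sigma>,t),(\<tau>,u)) \<noteq> 0"
  shows "\<exists>r s. F ((\<sigma>,r),(\<tau>,s)) \<noteq> 0 \<and> G ((\<sigma>, t - r),(\<tau>, u - s)) \<noteq> 0"
proof -
  from assms have "(\<Sum>(r, s)\<in>{(r, s). F ((\<sigma>, r), (\<tau>, s)) \<noteq> 0}.
      F ((\<sigma>, r), (\<tau>, s)) * G ((\<sigma>, t - r), (\<tau>, u - s))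
        * tw n \<theta> \<sigma> r (t - r) * tw n \<theta> \<tau> s (u - s)) \<noteq> 0"
    by (simp add: qmult2_def)
  then obtain p where "p \<in> {(r, s). F ((\<sigma>, r), (\<tau>, s)) \<noteq> 0}"
     "(\<lambda>(r,s). F ((\<sigma>, r), (\<tau>, s)) * G ((\<sigma>, t - r), (\<tau>, u - s))
        * tw n \<theta> \<sigma> r (t - r) * tw n \<theta> \<tau> s (u - s)) p \<noteq> 0"
    by (meson sum.not_neutral_contains_not_neutral)
  thus ?thesis by (cases p) auto
qed

lemma qmult2_hom2: "hom2 d F \<Longrightarrow> hom2 e G \<Longrightarrow> hom2 (d + e) (qmult2 n \<theta> F G)"
  unfolding hom2_def
proof (intro allI impI)
  fix \<sigma> t \<tau> u
  assume h: "\<forall>\<sigma> t \<tau> u. F ((\<sigma>, t), \<tau>, u) \<noteq> 0 \<longrightarrow> t = d" "\<forall>\<sigma> t \<tau> u. G ((\<sigma>, t), \<tau>, u) \<noteq> 0 \<longrightarrow> t = e"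
    and "qmult2 n \<theta> F G ((\<sigma>, t), \<tau>, u) \<noteq> 0"
  then obtain r s where "F ((\<sigma>,r),(\<tau>,s)) \<noteq> 0" "G ((\<sigma>, t - r),(\<tau>, u - s)) \<noteq> 0"
    using qmult2_nz by blast
  with h have "r = d" "t - r = e" by blast+
  thus "t = d + e" by (metis add_diff_cancel_left' diff_add_cancel add.commute)
qed

lemma qstar2_hom2: "hom2 d F \<Longrightarrow> hom2 (- d) (qstar2 n \<theta> F)"
  unfolding hom2_def
proof (intro allI impI)
  fix \<sigma> t \<tau> u
  assume h: "\<forall>\<sigma> t \<tau> u. F ((\<sigma>, t), \<tau>, u) \<noteq> 0 \<longrightarrow> t = d" and "qstar2 n \<theta> F ((\<sigma>, t), \<tau>, u) \<noteq> 0"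
  then have "F ((\<sigma>, -t), \<tau>, -u) \<noteq> 0" by (auto simp: qstar2_def)
  with h have "- t = d" by blast
  thus "t = - d" by auto
qed

lemma ee_perm: "\<tau> permutes {..<n} \<Longrightarrow> k < n \<Longrightarrow> \<tau> k < n"
  using permutes_in_image[of \<tau> "{..<n}" k] by auto

context
  fixes n \<theta> \<Delta> assumes cm: "is_comult n \<theta> \<Delta>"
begin

lemma D_mult: "a \<in> Alg n \<Longrightarrow> b \<in> Alg n \<Longrightarrow> \<Delta> (qmult n \<theta> a b) = qmult2 n \<theta> (\<Delta> a) (\<Delta> b)"
  using cm by (simp add: is_comult_def)
lemma D_star: "a \<in> Alg n \<Longrightarrow> \<Delta> (qstar n \<theta> a) = qstar2 n \<theta> (\<Delta> a)"
  using cm by (simp add: is_comult_def)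
lemma D_one: "\<Delta> (qone n) = qone2 n"
  using cm by (simp add: is_comult_def)
lemma D_uent: "i < n \<Longrightarrow> k < n \<Longrightarrow> \<Delta> (uent n i k) = (\<Sum>j<n. qtensor (uent n i j) (uent n j k))"
  using cm by (simp add: is_comult_def)

lemma DU_apply:
  assumes "i < n" "k < n"
  shows "\<Delta> (uent n i k) ((\<sigma>,t),(\<tau>,u)) =
    (if \<sigma> permutes {..<n} \<and> \<tau> permutes {..<n} \<and> \<sigma> (\<tau> k) = i \<and> t = ee i \<and> u = ee (\<tau> k) then 1 else 0)"
proof -
  have "\<Delta> (uent n i k) ((\<sigma>,t),(\<tau>,u)) = (\<Sum>j<n. if j = \<tau> k then
     (if \<sigma> permutes {..<n} \<and> \<tau> permutes {..<n} \<and> \<sigma> (\<tau> k) = i \<and> t = ee i \<and> u = ee (\<tau> k) then 1 else 0) else 0)"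
    unfolding D_uent[OF assms] sum_fun_apply' by (rule sum.cong) (auto simp: qtensor_def uent_apply)
  also have "\<dots> = (if \<sigma> permutes {..<n} \<and> \<tau> permutes {..<n} \<and> \<sigma> (\<tau> k) = i \<and> t = ee i \<and> u = ee (\<tau> k) then 1 else 0)"
    using ee_perm[of \<tau> n k] assms by (subst sum.delta) auto
  finally show ?thesis .
qed

lemma DUs_apply:
  assumes "i < n" "k < n"
  shows "\<Delta> (qstar n \<theta> (uent n i k)) ((\<sigma>,t),(\<tau>,u)) =
    (if \<sigma> permutes {..<n} \<and> \<tau> permutes {..<n} \<and> \<sigma> (\<tau> k) = i \<and> t = - ee i \<and> u = - ee (\<tau> k) then 1 else 0)"
proof -
  have e: "(- t = x) \<longleftrightarrow> (t = - x)" for t x :: "nat \<Rightarrow> int" by (metis minus_minus)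
  show ?thesis
    by (simp add: D_star uent_Alg assms qstar2_def DU_apply e)
       (auto simp: tw_ee)
qed

lemma DQ_apply:
  assumes "i < n" "k < n"
  shows "\<Delta> (qq n \<theta> i k) ((\<sigma>,t),(\<tau>,u)) =
    (if \<sigma> permutes {..<n} \<and> \<tau> permutes {..<n} \<and> \<sigma> (\<tau> k) = i \<and> t = 0 \<and> u = 0 then 1 else 0)"
proof -
  have "\<Delta> (qq n \<theta> i k) = qmult2 n \<theta> (\<Delta> (qstar n \<theta> (uent n i k))) (\<Delta> (uent n i k))"
    unfolding qq_def using assms by (simp add: D_mult uent_Alg ustar_Alg)
  moreover have "\<And>r s. \<Delta> (qstar n \<theta> (uent n i k)) ((\<sigma>,r),(\<tau>,s)) \<noteq> 0 \<longleftrightarrow>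
     (\<sigma> permutes {..<n} \<and> \<tau> permutes {..<n} \<and> \<sigma> (\<tau> k) = i) \<and> r = - ee i \<and> s = - ee (\<tau> k)"
    using assms by (simp add: DUs_apply)
  note qmult2_single[of "\<Delta> (qstar n \<theta> (uent n i k))" \<sigma> \<tau> _ "- ee i" "- ee (\<tau> k)", OF this, of n \<theta> "\<Delta> (uent n i k)" t u]
  ultimately show ?thesis using assms by (auto simp: DUs_apply DU_apply tw_ee)
qed

lemma DPP_apply:
  assumes "\<sigma> permutes {..<n}" "set xs \<subseteq> {..<n}"
  shows "\<Delta> (PP n \<theta> \<sigma> xs) ((\<sigma>',t),(\<tau>,u)) = (if \<sigma>' permutes {..<n} \<and> \<tau> permutes {..<n} \<and> t = 0 \<and> u = 0
     \<and> (\<forall>k\<in>set xs. \<sigma>' (\<tau> k) = \<sigma> k) then 1 else 0)"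
  using assms(2)
proof (induction xs arbitrary: \<sigma>' t \<tau> u)
  case Nil
  then show ?case by (simp add: PP_def D_one qone2_def qtensor_def qone_apply)
next
  case (Cons a xs)
  have a: "a < n" "\<sigma> a < n" using Cons.prems ee_perm[OF assms(1)] by auto
  have "\<Delta> (PP n \<theta> \<sigma> (a # xs)) = qmult2 n \<theta> (\<Delta> (qq n \<theta> (\<sigma> a) a)) (\<Delta> (PP n \<theta> \<sigma> xs))"
    unfolding PP_def foldr_Cons o_def by (rule D_mult[OF qq_Alg PP_Alg[unfolded PP_def]])
  moreover have "qmult2 n \<theta> (\<Delta> (qq n \<theta> (\<sigma> a) a)) (\<Delta> (PP n \<theta> \<sigma> xs)) ((\<sigma>',t),(\<tau>,u)) =
     \<Delta> (qq n \<theta> (\<sigma> a) a) ((\<sigma>',0),(\<tau>,0)) * \<Delta> (PP n \<theta> \<sigma> xs) ((\<sigma>',t),(\<tau>,u))"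
    by (rule qmult2_deg0) (simp add: DQ_apply a)
  ultimately show ?case using Cons by (auto simp: DQ_apply a)
qed

lemma Dpsum_apply:
  assumes "\<sigma> permutes {..<n}"
  shows "\<Delta> (psum \<sigma>) ((\<sigma>',t),(\<tau>,u)) = (if \<sigma>' permutes {..<n} \<and> \<tau> permutes {..<n} \<and> t = 0 \<and> u = 0
     \<and> (\<forall>k<n. \<sigma>' (\<tau> k) = \<sigma> k) then 1 else 0)"
  using DPP_apply[OF assms, of "[0..<n]"] PP_psum[OF assms, of \<theta>] by (simp add: atLeast0LessThan)

end


definition GG :: "nat \<Rightarrow> (nat \<Rightarrow> nat \<Rightarrow> real) \<Rightarrow> (qel \<Rightarrow> qel2) \<Rightarrow> (nat \<Rightarrow> int) \<Rightarrow> qel \<Rightarrow> bool" where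
  "GG n \<theta> \<Delta> d a \<longleftrightarrow> a \<in> Alg n \<and> hom2 d (\<Delta> a)"

lemma qmult_psum_psum: "qmult n \<theta> (psum \<sigma>) (psum \<sigma>) = psum \<sigma>"
proof (rule ext)
  fix k :: qkey
  obtain \<sigma>' t where k: "k = (\<sigma>',t)" by (cases k)
  show "qmult n \<theta> (psum \<sigma>) (psum \<sigma>) k = psum \<sigma> k"
    unfolding k by (subst qmult_deg0) (auto simp: psum_apply)
qed

lemma fold_psum: "foldr (\<lambda>i acc. qmult n \<theta> (psum \<sigma>) acc) xs (psum \<sigma>) = psum \<sigma>"
  by (induction xs) (auto simp: qmult_psum_psum)

lemma xpow0: "xpow n \<theta> \<sigma> (\<lambda>_. 0) = psum \<sigma>"
  unfolding xpow_def gpow_def using fold_psum[of n \<theta> \<sigma> "[0..<n]"] by simp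

context
  fixes n \<theta> \<Delta> assumes cm: "is_comult n \<theta> \<Delta>"
begin

lemma G_mult: "GG n \<theta> \<Delta> d a \<Longrightarrow> GG n \<theta> \<Delta> e b \<Longrightarrow> GG n \<theta> \<Delta> (d + e) (qmult n \<theta> a b)"
  unfolding GG_def using Alg_qmult D_mult[OF cm] qmult2_hom2 by metis

lemma G_star: "GG n \<theta> \<Delta> d a \<Longrightarrow> GG n \<theta> \<Delta> (- d) (qstar n \<theta> a)"
  unfolding GG_def using Alg_qstar D_star[OF cm] qstar2_hom2 by metis

lemma G_psum: "\<sigma> permutes {..<n} \<Longrightarrow> GG n \<theta> \<Delta> 0 (psum \<sigma>)"
  unfolding GG_def hom2_def by (auto simp: psum_Alg Dpsum_apply[OF cm] split: if_splits)

lemma G_uent: "i < n \<Longrightarrow> k < n \<Longrightarrow> GG n \<theta> \<Delta> (ee i) (uent n i k)"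
  unfolding GG_def hom2_def by (auto simp: uent_Alg DU_apply[OF cm] split: if_splits)

lemma gen_eq: assumes "\<sigma> permutes {..<n}" "i < n"
  shows "gen \<sigma> i = qmult n \<theta> (psum \<sigma>) (uent n i (inv \<sigma> i))"
proof (rule ext)
  fix k :: qkey
  obtain \<sigma>' t where k: "k = (\<sigma>',t)" by (cases k)
  show "gen \<sigma> i k = qmult n \<theta> (psum \<sigma>) (uent n i (inv \<sigma> i)) k"
    unfolding k by (subst qmult_deg0) (auto simp: psum_apply gen_apply uent_apply assms permutes_inverses[OF assms(1)])
qed

lemma G_gen: assumes "\<sigma> permutes {..<n}" "i < n" shows "GG n \<theta> \<Delta> (ee i) (gen \<sigma> i)"
proof -
  have "inv \<sigma> i < n" using ee_perm[OF permutes_inv[OF assms(1)] assms(2)] .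
  then have "GG n \<theta> \<Delta> (0 + ee i) (qmult n \<theta> (psum \<sigma>) (uent n i (inv \<sigma> i)))"
    using G_mult G_psum[OF assms(1)] G_uent assms by blast
  thus ?thesis using gen_eq[OF assms] by simp
qed

lemma G_iter: "GG n \<theta> \<Delta> d g \<Longrightarrow> GG n \<theta> \<Delta> d0 b \<Longrightarrow> GG n \<theta> \<Delta> (\<lambda>j. int m * d j + d0 j) ((qmult n \<theta> g ^^ m) b)"
proof (induction m)
  case 0
  then show ?case by simp
next
  case (Suc m)
  then have "GG n \<theta> \<Delta> (d + (\<lambda>j. int m * d j + d0 j)) ((qmult n \<theta> g ^^ Suc m) b)"
    using G_mult by simp
  moreover have "d + (\<lambda>j. int m * d j + d0 j) = (\<lambda>j. int (Suc m) * d j + d0 j)"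
    by (auto simp: fun_eq_iff algebra_simps)
  ultimately show ?case by simp
qed

lemma G_gpow: assumes "\<sigma> permutes {..<n}" "i < n"
  shows "GG n \<theta> \<Delta> (\<lambda>j. if j = i then k else 0) (gpow n \<theta> \<sigma> i k)"
proof (cases "0 \<le> k")
  case True
  have "GG n \<theta> \<Delta> (\<lambda>j. int (nat k) * ee i j + 0 j) ((qmult n \<theta> (gen \<sigma> i) ^^ nat k) (psum \<sigma>))"
    by (rule G_iter[OF G_gen[OF assms] G_psum[OF assms(1)]])
  moreover have "(\<lambda>j. int (nat k) * ee i j + 0 j) = (\<lambda>j. if j = i then k else 0)"
    using True by (auto simp: ee_def fun_eq_iff)
  ultimately show ?thesis using True by (simp add: gpow_def)
next
  case False
  have "GG n \<theta> \<Delta> (\<lambda>j. int (nat (-k)) * (- ee i) j + 0 j) ((qmult n \<theta> (qstar n \<theta> (gen \<sigma> i)) ^^ nat (-k)) (psum \<sigma>))"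
    by (rule G_iter[OF G_star[OF G_gen[OF assms]] G_psum[OF assms(1)]])
  moreover have "(\<lambda>j. int (nat (-k)) * (- ee i) j + 0 j) = (\<lambda>j. if j = i then k else 0)"
    using False by (auto simp: ee_def fun_eq_iff)
  ultimately show ?thesis using False by (simp add: gpow_def)
qed

lemma G_fold: assumes "\<sigma> permutes {..<n}"
  shows "distinct xs \<Longrightarrow> set xs \<subseteq> {..<n} \<Longrightarrow>
    GG n \<theta> \<Delta> (\<lambda>j. if j \<in> set xs then r j else 0) (foldr (\<lambda>i acc. qmult n \<theta> (gpow n \<theta> \<sigma> i (r i)) acc) xs (psum \<sigma>))"
proof (induction xs)
  case Nil
  then show ?case using G_psum[OF assms] by simp
next
  case (Cons a xs)
  then have "GG n \<theta> \<Delta> ((\<lambda>j. if j = a then r a else 0) + (\<lambda>j. if j \<in> set xs then r j else 0))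
     (foldr (\<lambda>i acc. qmult n \<theta> (gpow n \<theta> \<sigma> i (r i)) acc) (a # xs) (psum \<sigma>))"
    using G_mult G_gpow[OF assms] by simp
  moreover have "(\<lambda>j. if j = a then r a else 0) + (\<lambda>j. if j \<in> set xs then r j else 0) =
      (\<lambda>j. if j \<in> set (a # xs) then r j else 0)"
    using Cons.prems by (auto simp: fun_eq_iff)
  ultimately show ?case by simp
qed

lemma G_xpow: assumes "\<sigma> permutes {..<n}" "\<forall>i\<ge>n. r i = 0"
  shows "GG n \<theta> \<Delta> r (xpow n \<theta> \<sigma> r)"
proof -
  have "(\<lambda>j. if j \<in> set [0..<n] then r j else 0) = r" using assms(2) by (auto simp: fun_eq_iff)
  thus ?thesis using G_fold[OF assms(1), of "[0..<n]" r] by (simp add: xpow_def atLeast0LessThan)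
qed

end


context
  fixes n \<theta> \<Delta> h assumes cm: "is_comult n \<theta> \<Delta>" and hs: "is_haar_state n \<theta> \<Delta> h"
begin

lemma h_add: "a \<in> Alg n \<Longrightarrow> b \<in> Alg n \<Longrightarrow> h (a + b) = h a + h b"
  using hs by (simp add: is_haar_state_def is_state_def)

lemma h_one: "h (qone n) = 1"
  using hs by (simp add: is_haar_state_def is_state_def)

lemma h_zero: "h 0 = 0"
  using h_add[OF Alg_zero Alg_zero] by simp

lemma h_inv: assumes "a \<in> Alg n" "\<rho> permutes {..<n}"
  shows "h (\<lambda>l. \<Delta> a ((\<rho>,0),l)) = h a"
proof -
  have "slice_right h (\<Delta> a) = qscale (h a) (qone n)"
    using hs assms(1) by (simp add: is_haar_state_def)
  from fun_cong[OF this, of "(\<rho>,0)"] show ?thesis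
    using assms(2) by (simp add: slice_right_def qscale_def qone_apply)
qed

lemma h_nonzero_deg: assumes "GG n \<theta> \<Delta> r a" "r \<noteq> 0" shows "h a = 0"
proof -
  have "(\<lambda>l. \<Delta> a ((id,0),l)) = 0"
  proof (rule ext)
    fix l :: qkey
    obtain \<tau> u where l: "l = (\<tau>,u)" by (cases l)
    show "\<Delta> a ((id,0),l) = 0 l" using assms unfolding l GG_def hom2_def by auto
  qed
  with h_inv[of a id] assms h_zero show ?thesis by (simp add: GG_def permutes_id)
qed

lemma h_psum_shift: assumes "\<sigma> permutes {..<n}" "\<sigma>' permutes {..<n}"
  shows "h (psum (inv \<sigma>' \<circ> \<sigma>)) = h (psum \<sigma>)"
proof -
  have "(\<lambda>l. \<Delta> (psum \<sigma>) ((\<sigma>',0),l)) = psum (inv \<sigma>' \<circ> \<sigma>)"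
  proof (rule ext)
    fix l :: qkey
    obtain \<tau> u where l: "l = (\<tau>,u)" by (cases l)
    have "(\<tau> permutes {..<n} \<and> (\<forall>k<n. \<sigma>' (\<tau> k) = \<sigma> k)) \<longleftrightarrow> \<tau> = inv \<sigma>' \<circ> \<sigma>"
    proof
      assume a: "\<tau> permutes {..<n} \<and> (\<forall>k<n. \<sigma>' (\<tau> k) = \<sigma> k)"
      show "\<tau> = inv \<sigma>' \<circ> \<sigma>"
      proof
        fix x show "\<tau> x = (inv \<sigma>' \<circ> \<sigma>) x"
        proof (cases "x < n")
          case True
          then have "inv \<sigma>' (\<sigma>' (\<tau> x)) = inv \<sigma>' (\<sigma> x)" using a by simp
          then show ?thesis using permutes_inverses(2)[OF assms(2)] by simp
        next
          case False
          then have "\<tau> x = x" "\<sigma> x = x" using a assms permutes_not_in by fastforce+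
          moreover have "inv \<sigma>' x = x" using permutes_not_in[OF permutes_inv[OF assms(2)]] False by simp
          ultimately show ?thesis by simp
        qed
      qed
    next
      assume "\<tau> = inv \<sigma>' \<circ> \<sigma>"
      then show "\<tau> permutes {..<n} \<and> (\<forall>k<n. \<sigma>' (\<tau> k) = \<sigma> k)"
        using permutes_compose[OF assms(1) permutes_inv[OF assms(2)]] permutes_inverses(1)[OF assms(2)] by simp
    qed
    then show "\<Delta> (psum \<sigma>) ((\<sigma>',0),l) = psum (inv \<sigma>' \<circ> \<sigma>) l"
      unfolding l using assms by (auto simp: Dpsum_apply[OF cm] psum_apply)
  qed
  with h_inv[OF psum_Alg[OF assms(1)] assms(2)] show ?thesis by simp
qed

lemma h_psum_const: assumes "\<sigma> permutes {..<n}" "\<rho> permutes {..<n}"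
  shows "h (psum \<rho>) = h (psum \<sigma>)"
proof -
  define \<sigma>' where "\<sigma>' = \<sigma> \<circ> inv \<rho>"
  have p: "\<sigma>' permutes {..<n}" unfolding \<sigma>'_def by (rule permutes_compose[OF permutes_inv[OF assms(2)] assms(1)])
  have "inv \<sigma>' \<circ> \<sigma> = \<rho>"
  proof
    fix x
    have "\<sigma>' (\<rho> x) = \<sigma> x" unfolding \<sigma>'_def using permutes_inverses(2)[OF assms(2)] by simp
    then have "inv \<sigma>' (\<sigma> x) = inv \<sigma>' (\<sigma>' (\<rho> x))" by simp
    also have "\<dots> = \<rho> x" using permutes_inverses(2)[OF p] by simp
    finally show "(inv \<sigma>' \<circ> \<sigma>) x = \<rho> x" by simp
  qed
  with h_psum_shift[OF assms(1) p] show ?thesis by simp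
qed

lemma h_sum_psum: "finite A \<Longrightarrow> A \<subseteq> {\<sigma>. \<sigma> permutes {..<n}} \<Longrightarrow>
   (\<Sum>\<sigma>\<in>A. psum \<sigma>) \<in> Alg n \<and> h (\<Sum>\<sigma>\<in>A. psum \<sigma>) = (\<Sum>\<sigma>\<in>A. h (psum \<sigma>))"
proof (induction A rule: finite_induct)
  case empty
  have z: "(\<lambda>a::qkey. 0::complex) = 0" by (simp add: fun_eq_iff)
  then show ?case by (simp add: Alg_zero h_zero)
next
  case (insert x F)
  then have "psum x \<in> Alg n" by (simp add: psum_Alg)
  have e: "(\<Sum>\<sigma>\<in>insert x F. psum \<sigma>) = psum x + (\<Sum>\<sigma>\<in>F. psum \<sigma>)"
    by (rule sum.insert[OF insert(1,2)])
  have e2: "(\<Sum>\<sigma>\<in>insert x F. h (psum \<sigma>)) = h (psum x) + (\<Sum>\<sigma>\<in>F. h (psum \<sigma>))"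
    by (rule sum.insert[OF insert(1,2)])
  from insert have ih: "(\<Sum>\<sigma>\<in>F. psum \<sigma>) \<in> Alg n" "h (\<Sum>\<sigma>\<in>F. psum \<sigma>) = (\<Sum>\<sigma>\<in>F. h (psum \<sigma>))" by auto
  show ?case unfolding e e2 using Alg_add[OF \<open>psum x \<in> Alg n\<close> ih(1)] h_add[OF \<open>psum x \<in> Alg n\<close> ih(1)] ih(2) by argo
qed

lemma qone_sum: "qone n = (\<Sum>\<sigma>\<in>{\<sigma>. \<sigma> permutes {..<n}}. psum \<sigma>)"
proof (rule ext)
  fix k :: qkey
  obtain \<sigma>' t where k: "k = (\<sigma>',t)" by (cases k)
  have "(\<Sum>\<sigma>\<in>{\<sigma>. \<sigma> permutes {..<n}}. psum \<sigma> (\<sigma>',t)) =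
     (\<Sum>\<sigma>\<in>{\<sigma>. \<sigma> permutes {..<n}}. if \<sigma> = \<sigma>' then (if t = 0 then 1 else 0) else 0)"
    by (rule sum.cong) (auto simp: psum_apply)
  also have "\<dots> = qone n (\<sigma>',t)"
    by (subst sum.delta) (auto simp: finite_permutations qone_apply)
  finally show "qone n k = (\<Sum>\<sigma>\<in>{\<sigma>. \<sigma> permutes {..<n}}. psum \<sigma>) k"
    unfolding k sum_fun_apply' by simp
qed

lemma h_psum: assumes "\<sigma> permutes {..<n}" shows "h (psum \<sigma>) = 1 / fact n"
proof -
  let ?S = "{\<sigma>. \<sigma> permutes {..<n}}"
  have "1 = h (\<Sum>\<sigma>\<in>?S. psum \<sigma>)" using h_one qone_sum by simp
  also have "\<dots> = (\<Sum>\<rho>\<in>?S. h (psum \<rho>))" using h_sum_psum[of ?S] finite_permutations by blast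
  also have "\<dots> = (\<Sum>\<rho>\<in>?S. h (psum \<sigma>))" by (rule sum.cong) (auto intro: h_psum_const[OF assms])
  also have "\<dots> = fact n * h (psum \<sigma>)" by (simp add: card_permutations)
  finally have "fact n * h (psum \<sigma>) = 1" by simp
  thus ?thesis by (simp add: field_simps)
qed

end

theorem proposition4p3:
  fixes n :: nat and \<theta> :: "nat \<Rightarrow> nat \<Rightarrow> real"
    and \<Delta> :: "qel \<Rightarrow> qel2" and h :: "qel \<Rightarrow> complex"
    and \<sigma> :: "nat \<Rightarrow> nat" and r :: "nat \<Rightarrow> int"
  assumes "n \<ge> 2"
    and "\<forall>i<n. \<forall>j<n. \<theta> i j = - \<theta> j i"
    and "is_comult n \<theta> \<Delta>"
    and "is_haar_state n \<theta> \<Delta> h"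
    and "\<sigma> permutes {..<n}"
    and "\<forall>i\<ge>n. r i = 0"
  shows "h (xpow n \<theta> \<sigma> r) = (if r = (\<lambda>_. 0) then 1 / fact n else 0)"
proof (cases "r = (\<lambda>_. 0)")
  case True
  then show ?thesis using xpow0 h_psum[OF assms(3,4,5)] by simp
next
  case False
  then have "r \<noteq> 0" by simp
  with h_nonzero_deg[OF assms(3,4) G_xpow[OF assms(3,5,6)]] show ?thesis using False by simp
qed

end
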